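(* Let $\varepsilon\in(0,1]$, let $\mathcal D$ be a distribution on $\mathbb R^d$, let $f:\mathbb R^d\to\{0,1\}$ be measurable, and let $S=\{x_1,\dots,x_N\}\subset\mathbb R^d$. For a matrix $A$ write $\mathcal L(A)=\mathbb E_{x\sim\mathcal D}\sum_{i=1}^N p_{S,A}(x_i,x)\,|f(x_i)-f(x)|$. Then $$\Big|\min_{A\in\mathcal A_\varepsilon}\mathcal L(A)-\inf_{A\in\mathcal A}\mathcal L(A)\Big|\le15\,\varepsilon.$$
   Context: $K_A(x,y)=\frac{1}{1+\|A(x-y)\|_2^2}$ and $p_{S,A}(x_i,x)=\frac{K_A(x_i,x)}{\sum_{j=1}^N K_A(x_j,x)}$. $\mathcal A$ is the set of diagonal $d\times d$ real matrices whose diagonal entries all lie in $[1,2]$. $\mathcal A_\varepsilon$ is the finite set of diagonal $d\times d$ matrices whose diagonal entries all lie in $G_\varepsilon=\{(1+\varepsilon)^k: k\in\mathbb Z_{\ge0},\ (1+\varepsilon)^k\le2\}$. *)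

theory Defs
  imports "HOL-Probability.Probability"
begin

definition kernelK :: "real^'d^'d \<Rightarrow> real^'d \<Rightarrow> real^'d \<Rightarrow> real" where
  "kernelK A x y = 1 / (1 + (norm (A *v (x - y)))\<^sup>2)"

definition pSA :: "(real^'d) set \<Rightarrow> real^'d^'d \<Rightarrow> real^'d \<Rightarrow> real^'d \<Rightarrow> real" where
  "pSA S A xi x = kernelK A xi x / (\<Sum>xj\<in>S. kernelK A xj x)"

definition diag_mats :: "real set \<Rightarrow> (real^'d^'d) set" where
  "diag_mats G = {A. (\<forall>i j. i \<noteq> j \<longrightarrow> A $ i $ j = 0) \<and> (\<forall>i. A $ i $ i \<in> G)}"

definition matsA :: "(real^'d^'d) set" where
  "matsA = diag_mats {1..2}"

definition gridG :: "real \<Rightarrow> real set" where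
  "gridG \<epsilon> = {(1 + \<epsilon>) ^ k | k::nat. (1 + \<epsilon>) ^ k \<le> 2}"

definition matsA_eps :: "real \<Rightarrow> (real^'d^'d) set" where
  "matsA_eps \<epsilon> = diag_mats (gridG \<epsilon>)"

definition lossL :: "(real^'d) measure \<Rightarrow> (real^'d \<Rightarrow> real) \<Rightarrow> (real^'d) set \<Rightarrow> real^'d^'d \<Rightarrow> real" where
  "lossL D f S A = (\<integral>x. (\<Sum>xi\<in>S. pSA S A xi x * \<bar>f xi - f x\<bar>) \<partial>D)"

end

theory Submission
  imports Defs
begin


lemma diag_mult:
  assumes "A \<in> diag_mats G"
  shows "(A *v v) $ k = A $ k $ k * v $ k"
proof -
  have "(A *v v) $ k = (\<Sum>j\<in>UNIV. A $ k $ j * v $ j)" by (simp add: matrix_vector_mult_def)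
  also have "\<dots> = (\<Sum>j\<in>UNIV. if j = k then A $ k $ k * v $ k else 0)"
    by (rule sum.cong) (use assms in \<open>auto simp: diag_mats_def\<close>)
  also have "\<dots> = A $ k $ k * v $ k" by simp
  finally show ?thesis .
qed

lemma diag_norm:
  assumes "A \<in> diag_mats G"
  shows "(norm (A *v v))\<^sup>2 = (\<Sum>k\<in>UNIV. (A $ k $ k * v $ k)\<^sup>2)"
  unfolding power2_norm_eq_inner inner_vec_def by (simp add: diag_mult[OF assms] power2_eq_square)

lemma kernel_cmp:
  assumes "A \<in> diag_mats G" "B \<in> diag_mats H" "c \<ge> 1"
    and "\<And>k. 0 \<le> B $ k $ k \<and> B $ k $ k \<le> A $ k $ k \<and> A $ k $ k \<le> c * B $ k $ k"
  shows "kernelK A y x \<le> kernelK B y x \<and> kernelK B y x \<le> c\<^sup>2 * kernelK A y x"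
proof -
  define t where "t = (norm (A *v (y - x)))\<^sup>2"
  define s where "s = (norm (B *v (y - x)))\<^sup>2"
  have ts: "s \<le> t \<and> t \<le> c\<^sup>2 * s"
  proof -
    have t: "t = (\<Sum>k\<in>UNIV. (A $ k $ k)\<^sup>2 * ((y-x) $ k)\<^sup>2)"
      unfolding t_def diag_norm[OF assms(1)] by (simp add: power_mult_distrib)
    have s: "s = (\<Sum>k\<in>UNIV. (B $ k $ k)\<^sup>2 * ((y-x) $ k)\<^sup>2)"
      unfolding s_def diag_norm[OF assms(2)] by (simp add: power_mult_distrib)
    have 1: "(B $ k $ k)\<^sup>2 \<le> (A $ k $ k)\<^sup>2" for k
      using assms(4)[of k] by (intro power_mono) auto
    have 2: "(A $ k $ k)\<^sup>2 \<le> c\<^sup>2 * (B $ k $ k)\<^sup>2" for k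
      using assms(4)[of k] power_mono[of "A $ k $ k" "c * B $ k $ k" 2]
      by (auto simp: power_mult_distrib)
    have "s \<le> t" unfolding s t by (intro sum_mono mult_right_mono 1) auto
    moreover have "t \<le> c\<^sup>2 * s" unfolding s t sum_distrib_left
      by (intro sum_mono) (metis 2 mult.assoc mult_right_mono zero_le_power2)
    ultimately show ?thesis by simp
  qed
  have s0: "0 \<le> s" unfolding s_def by simp
  have c2: "1 \<le> c\<^sup>2" using assms(3) by (simp add: one_le_power)
  have kA: "kernelK A y x = 1 / (1 + t)" by (simp add: kernelK_def t_def)
  have kB: "kernelK B y x = 1 / (1 + s)" by (simp add: kernelK_def s_def)
  have "1 / (1 + t) \<le> 1 / (1 + s)" using ts s0 by (intro divide_left_mono) auto
  moreover have "1 / (1 + s) \<le> c\<^sup>2 * (1 / (1 + t))"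
  proof -
    have "1 + t \<le> c\<^sup>2 * (1 + s)" using ts c2 by (simp add: algebra_simps)
    then show ?thesis using s0 ts by (simp add: field_simps)
  qed
  ultimately show ?thesis using kA kB by simp
qed

lemma ratio_bound:
  fixes K K' g :: "'a \<Rightarrow> real"
  assumes "finite S" "S \<noteq> {}" "\<And>i. i \<in> S \<Longrightarrow> 0 < K i"
    "\<And>i. i \<in> S \<Longrightarrow> K i \<le> K' i \<and> K' i \<le> c * K i"
    "\<And>i. i \<in> S \<Longrightarrow> 0 \<le> g i \<and> g i \<le> 1" "c \<ge> 1"
  shows "\<bar>(\<Sum>i\<in>S. K' i * g i) / (\<Sum>i\<in>S. K' i) - (\<Sum>i\<in>S. K i * g i) / (\<Sum>i\<in>S. K i)\<bar> \<le> c - 1"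
proof -
  define P where "P = (\<Sum>i\<in>S. K i * g i)"
  define Q where "Q = (\<Sum>i\<in>S. K i)"
  define P' where "P' = (\<Sum>i\<in>S. K' i * g i)"
  define Q' where "Q' = (\<Sum>i\<in>S. K' i)"
  have Q0: "0 < Q" unfolding Q_def using assms by (intro sum_pos) auto
  have P0: "0 \<le> P" unfolding P_def by (intro sum_nonneg) (meson assms less_imp_le mult_nonneg_nonneg)
  have PQ: "P \<le> Q" unfolding P_def Q_def using assms
    by (intro sum_mono) (metis less_imp_le mult.right_neutral mult_left_mono)
  have PP: "P \<le> P'" unfolding P_def P'_def using assms by (intro sum_mono mult_right_mono) auto
  have PP2: "P' \<le> c * P" unfolding P_def P'_def sum_distrib_left using assms
    by (intro sum_mono) (metis mult.assoc mult_right_mono)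
  have QQ: "Q \<le> Q'" unfolding Q_def Q'_def using assms by (intro sum_mono) auto
  have QQ2: "Q' \<le> c * Q" unfolding Q_def Q'_def sum_distrib_left using assms by (intro sum_mono) auto
  have Q'0: "0 < Q'" using Q0 QQ by simp
  have up: "P' / Q' \<le> c * P / Q"
  proof -
    have "P' / Q' \<le> c * P / Q'" using PP2 Q'0 by (simp add: divide_right_mono)
    also have "\<dots> \<le> c * P / Q" using Q0 QQ P0 assms(6) by (intro divide_left_mono) auto
    finally show ?thesis .
  qed
  have lo: "P / (c * Q) \<le> P' / Q'"
  proof -
    have "P / (c * Q) \<le> P / Q'" using Q'0 QQ2 P0 by (intro divide_left_mono) auto
    also have "\<dots> \<le> P' / Q'" using PP Q'0 by (simp add: divide_right_mono)
    finally show ?thesis .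
  qed
  define r where "r = P / Q"
  have r01: "0 \<le> r" "r \<le> 1" unfolding r_def using P0 PQ Q0 by auto
  have "c * P / Q = c * r" "P / (c * Q) = r / c" unfolding r_def by auto
  then have b: "r / c \<le> P' / Q'" "P' / Q' \<le> c * r" using up lo by auto
  have "r - r / c \<le> c - 1"
  proof -
    have "r - r / c = r * (1 - 1 / c)" by (simp add: algebra_simps)
    also have "\<dots> \<le> 1 - 1 / c" using r01 assms(6) by (intro mult_left_le_one_le) auto
    also have "\<dots> \<le> c - 1"
    proof -
      have "(2 - c) * c \<le> 1" using zero_le_power2[of "c-1"] by (simp add: power2_eq_square algebra_simps)
      then have "2 - c \<le> 1/c" using assms(6) by (simp add: le_divide_eq)
      then show ?thesis by simp
    qed
    finally show ?thesis .
  qed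
  moreover have "c * r - r \<le> c - 1"
  proof -
    have "c * r - r = (c - 1) * r" by (simp add: algebra_simps)
    also have "\<dots> \<le> (c - 1) * 1" using r01 assms(6) by (intro mult_left_mono) auto
    finally show ?thesis by simp
  qed
  ultimately show ?thesis using b unfolding P_def[symmetric] Q_def[symmetric] P'_def[symmetric] Q'_def[symmetric] r_def[symmetric]
    by linarith
qed



lemma grid_bound:
  assumes "0 < e" "(1 + e) ^ k \<le> (2::real)"
  shows "k \<le> nat \<lceil>1 / e\<rceil>"
proof -
  have "1 + real k * e \<le> (1 + e) ^ k" using assms by (intro Bernoulli_inequality) auto
  then have "real k * e \<le> 1" using assms by simp
  then have "real k \<le> 1 / e" using assms by (simp add: field_simps)
  then show ?thesis by linarith
qed

lemma grid_finite: "0 < e \<Longrightarrow> finite (gridG e)"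
proof -
  assume e: "0 < e"
  have "gridG e \<subseteq> (\<lambda>k. (1 + e) ^ k) ` {..nat \<lceil>1 / e\<rceil>}"
    unfolding gridG_def using grid_bound[OF e] by auto
  then show ?thesis by (rule finite_subset) auto
qed

lemma grid_sub: "0 < e \<Longrightarrow> gridG e \<subseteq> {1..2}"
  unfolding gridG_def by (auto intro: one_le_power)

lemma grid_approx:
  assumes e: "0 < e" and a: "1 \<le> a" "a \<le> (2::real)"
  shows "\<exists>g\<in>gridG e. g \<le> a \<and> a \<le> (1 + e) * g"
proof -
  define K where "K = {k. (1 + e) ^ k \<le> a}"
  have fin: "finite K" unfolding K_def
    by (rule finite_subset[of _ "{..nat \<lceil>1 / e\<rceil>}"]) (use grid_bound[OF e] a in auto)
  have "0 \<in> K" unfolding K_def using a by simp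
  define k where "k = Max K"
  have kK: "k \<in> K" unfolding k_def using fin \<open>0 \<in> K\<close> by (intro Max_in) auto
  have "Suc k \<notin> K" using fin k_def by (metis Max_ge Suc_n_not_le_n)
  then have "a < (1 + e) ^ Suc k" unfolding K_def by auto
  moreover have "(1 + e) ^ k \<le> a" using kK unfolding K_def by auto
  moreover have "(1 + e) ^ k \<in> gridG e" unfolding gridG_def using kK a unfolding K_def by auto
  ultimately show ?thesis by (intro bexI[of _ "(1+e)^k"]) auto
qed

lemma diag_finite:
  assumes "finite G"
  shows "finite (diag_mats G :: (real^'d^'d) set)"
proof -
  have "(diag_mats G :: (real^'d^'d) set) \<subseteq> (\<lambda>h. \<chi> i j. if i = j then h i else 0) ` (Pi\<^sub>E UNIV (\<lambda>_. G))"
  proof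
    fix A :: "real^'d^'d" assume A: "A \<in> diag_mats G"
    have "A = (\<chi> i j. if i = j then (\<lambda>i. A $ i $ i) i else 0)"
      using A by (auto simp: vec_eq_iff diag_mats_def)
    moreover have "(\<lambda>i. A $ i $ i) \<in> Pi\<^sub>E UNIV (\<lambda>_. G)"
      using A by (auto simp: diag_mats_def PiE_UNIV_domain)
    ultimately show "A \<in> (\<lambda>h. \<chi> i j. if i = j then h i else 0) ` (Pi\<^sub>E UNIV (\<lambda>_. G))"
      using image_eqI[of A "\<lambda>h. \<chi> i j. if i = j then h i else 0" "\<lambda>i. A $ i $ i"] by simp
  qed
  then show ?thesis by (rule finite_subset) (intro finite_imageI finite_PiE assms; simp)
qed

lemma diag_nonempty: "G \<noteq> {} \<Longrightarrow> diag_mats G \<noteq> {}"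
proof -
  assume "G \<noteq> {}" then obtain g where "g \<in> G" by auto
  then have "(\<chi> i j. if i = j then g else 0) \<in> diag_mats G" by (auto simp: diag_mats_def)
  then show ?thesis by auto
qed

lemma kernel_pos: "0 < kernelK A y x"
  unfolding kernelK_def by (simp add: add_pos_nonneg)

lemma integrand_eq:
  "(\<Sum>xi\<in>S. pSA S A xi x * g xi) = (\<Sum>xi\<in>S. kernelK A xi x * g xi) / (\<Sum>xi\<in>S. kernelK A xi x)"
  unfolding pSA_def sum_divide_distrib by (simp add: algebra_simps)

lemma integrand_meas:
  fixes f :: "real^'d \<Rightarrow> real"
  assumes "f \<in> borel_measurable borel"
  shows "(\<lambda>x. \<Sum>xi\<in>S. pSA S A xi x * \<bar>f xi - f x\<bar>) \<in> borel_measurable borel"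
proof -
  have k: "(\<lambda>x. kernelK A y x) \<in> borel_measurable borel" for y
  proof -
    have c: "continuous_on UNIV (\<lambda>x. A *v (y - x))"
      by (rule continuous_on_compose2[OF matrix_vector_mult_linear_continuous_on[of UNIV A]]) (auto intro: continuous_intros)
    have n: "1 + (norm (A *v (y - x)))\<^sup>2 \<noteq> 0" for x
      by (metis add_pos_nonneg less_irrefl zero_le_power2 zero_less_one)
    show ?thesis unfolding kernelK_def using c n by (intro borel_measurable_continuous_onI continuous_intros) auto
  qed
  show ?thesis unfolding pSA_def using assms k by measurable
qed



lemma h_bound:
  fixes f :: "real^'d \<Rightarrow> real"
  assumes "finite S" "S \<noteq> {}" "\<forall>x. f x \<in> {0, 1}"
  shows "0 \<le> (\<Sum>xi\<in>S. pSA S A xi x * \<bar>f xi - f x\<bar>) \<and> (\<Sum>xi\<in>S. pSA S A xi x * \<bar>f xi - f x\<bar>) \<le> 1"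
proof -
  have g: "0 \<le> \<bar>f xi - f x\<bar> \<and> \<bar>f xi - f x\<bar> \<le> 1" for xi
    using assms(3)[rule_format, of xi] assms(3)[rule_format, of x] by auto
  have Q: "0 < (\<Sum>xi\<in>S. kernelK A xi x)" using assms kernel_pos by (intro sum_pos) auto
  have P0: "0 \<le> (\<Sum>xi\<in>S. kernelK A xi x * \<bar>f xi - f x\<bar>)"
    by (intro sum_nonneg mult_nonneg_nonneg) (auto intro: less_imp_le kernel_pos)
  have PQ: "(\<Sum>xi\<in>S. kernelK A xi x * \<bar>f xi - f x\<bar>) \<le> (\<Sum>xi\<in>S. kernelK A xi x)"
    by (intro sum_mono) (metis g kernel_pos less_imp_le mult.right_neutral mult_left_mono)
  show ?thesis unfolding integrand_eq using Q P0 PQ by auto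
qed

theorem mainTheorem12:
  fixes \<epsilon> :: real and D :: "(real^'d) measure" and f :: "real^'d \<Rightarrow> real"
    and S :: "(real^'d) set"
  assumes "0 < \<epsilon>" and "\<epsilon> \<le> 1"
    and "prob_space D" and "sets D = sets borel"
    and "f \<in> borel_measurable borel" and "\<forall>x. f x \<in> {0, 1}"
    and "finite S" and "S \<noteq> {}"
  shows "\<bar>Min (lossL D f S ` matsA_eps \<epsilon>) - (INF A\<in>matsA. lossL D f S A)\<bar> \<le> 15 * \<epsilon>"
proof -
  define L where "L = lossL D f S"
  define h where "h A x = (\<Sum>xi\<in>S. pSA S A xi x * \<bar>f xi - f x\<bar>)" for A x
  define c where "c = (1 + \<epsilon>)\<^sup>2"
  interpret P: prob_space D by fact
  have Ldef: "L A = (\<integral>x. h A x \<partial>D)" for A unfolding L_def h_def lossL_def by simp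
  have hb: "0 \<le> h A x \<and> h A x \<le> 1" for A x unfolding h_def using h_bound assms by blast
  have hm: "h A \<in> borel_measurable D" for A
    unfolding h_def measurable_cong_sets[OF assms(4) refl] using integrand_meas[OF assms(5)] .
  have hi: "integrable D (h A)" for A
    by (rule P.integrable_const_bound[of _ 1]) (use hb hm in auto)
  have L0: "0 \<le> L A" for A unfolding Ldef by (rule integral_nonneg_AE) (use hb in auto)
  have sub: "matsA_eps \<epsilon> \<subseteq> (matsA :: (real^'d^'d) set)"
    unfolding matsA_eps_def matsA_def diag_mats_def using grid_sub[OF assms(1)] by auto
  have fin: "finite (matsA_eps \<epsilon> :: (real^'d^'d) set)"
    unfolding matsA_eps_def by (intro diag_finite grid_finite assms(1))
  have ne: "(matsA_eps \<epsilon> :: (real^'d^'d) set) \<noteq> {}"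
    unfolding matsA_eps_def using grid_approx[OF assms(1), of 1] by (intro diag_nonempty) auto
  have neA: "(matsA :: (real^'d^'d) set) \<noteq> {}" using sub ne by auto
  have bdd: "bdd_below (L ` matsA)" using L0 by (intro bdd_belowI[of _ 0]) auto
  define M where "M = Min (L ` (matsA_eps \<epsilon> :: (real^'d^'d) set))"
  have Min_in: "M \<in> L ` matsA_eps \<epsilon>" unfolding M_def using fin ne by (intro Min_in) auto
  have lo: "(INF A\<in>matsA. L A) \<le> M"
    using Min_in sub bdd by (auto intro: cINF_lower)
  have c1: "c - 1 \<le> 3 * \<epsilon>" unfolding c_def using assms(1,2)
    by (simp add: power2_eq_square algebra_simps)
  obtain g where g: "\<And>a. a \<in> {1..2} \<Longrightarrow> g a \<in> gridG \<epsilon> \<and> g a \<le> a \<and> a \<le> (1 + \<epsilon>) * g a"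
  proof -
    have "\<forall>a\<in>{1..2}. \<exists>y. y \<in> gridG \<epsilon> \<and> y \<le> a \<and> a \<le> (1 + \<epsilon>) * y"
      using grid_approx[OF assms(1)] by fastforce
    from bchoice[OF this] obtain g where "\<forall>a\<in>{1..2}. g a \<in> gridG \<epsilon> \<and> g a \<le> a \<and> a \<le> (1 + \<epsilon>) * g a" by blast
    then show ?thesis using that by blast
  qed
  have approx: "M \<le> L A + 3 * \<epsilon>" if A: "A \<in> matsA" for A
  proof -
    define B :: "real^'d^'d" where "B = (\<chi> i j. if i = j then g (A $ i $ i) else 0)"
    have Ad: "A $ i $ i \<in> {1..2}" for i using A by (auto simp: matsA_def diag_mats_def)
    have Beps: "B \<in> matsA_eps \<epsilon>" unfolding matsA_eps_def diag_mats_def B_def using g Ad by auto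
    have Bd: "B $ k $ k = g (A $ k $ k)" for k by (simp add: B_def)
    have Bge: "1 \<le> B $ k $ k" for k
      using Bd g[OF Ad[of k]] grid_sub[OF assms(1)] by auto
    have Adm: "A \<in> diag_mats {1..2}" using A by (simp add: matsA_def)
    have Bdm: "B \<in> diag_mats (gridG \<epsilon>)" using Beps by (simp add: matsA_eps_def)
    have kc: "kernelK A y x \<le> kernelK B y x \<and> kernelK B y x \<le> (1 + \<epsilon>)\<^sup>2 * kernelK A y x" for y x
      by (rule kernel_cmp[OF Adm Bdm]) (use assms(1) Bd g[OF Ad] Bge in \<open>auto intro: order.trans[OF zero_le_one]\<close>)
    have pw: "h B x \<le> h A x + (c - 1)" for x
    proof -
      have "\<bar>(\<Sum>i\<in>S. kernelK B i x * \<bar>f i - f x\<bar>) / (\<Sum>i\<in>S. kernelK B i x) -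
             (\<Sum>i\<in>S. kernelK A i x * \<bar>f i - f x\<bar>) / (\<Sum>i\<in>S. kernelK A i x)\<bar> \<le> c - 1"
      proof (rule ratio_bound[OF assms(7,8)])
        show "\<And>i. 0 < kernelK A i x" by (rule kernel_pos)
        show "\<And>i. kernelK A i x \<le> kernelK B i x \<and> kernelK B i x \<le> c * kernelK A i x"
          using kc unfolding c_def by blast
        show "\<And>i. 0 \<le> \<bar>f i - f x\<bar> \<and> \<bar>f i - f x\<bar> \<le> 1"
          using assms(6) by (metis insertE singletonD abs_0 abs_minus_commute abs_zero cancel_comm_monoid_add_class.diff_cancel diff_0_right abs_one diff_zero order_refl zero_le_one abs_ge_zero)
        show "1 \<le> c" unfolding c_def using assms(1) by (simp add: one_le_power)
      qed
      then show ?thesis unfolding h_def integrand_eq by linarith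
    qed
    have "L B \<le> (\<integral>x. (h A x + (c - 1)) \<partial>D)" unfolding Ldef
      by (rule integral_mono) (use hi pw in auto)
    also have "\<dots> = L A + (c - 1)" unfolding Ldef using hi
      by (simp add: P.prob_space)
    finally have "L B \<le> L A + (c - 1)" .
    moreover have "M \<le> L B" unfolding M_def using fin Beps by (intro Min_le) auto
    ultimately show ?thesis using c1 by linarith
  qed
  have up: "M - 3 * \<epsilon> \<le> (INF A\<in>matsA. L A)"
    using neA approx by (intro cINF_greatest) (auto simp: algebra_simps)
  have "\<bar>M - (INF A\<in>matsA. L A)\<bar> \<le> 3 * \<epsilon>" using lo up by linarith
  then show ?thesis using assms(1) unfolding M_def L_def by linarith
qed


end
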